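(* Let $\mathbb F$ be any field, $n\ge k>1$, and let $\mathcal K\subseteq M_{n\times k}(\mathbb F)$ be a linear variety with $\operatorname{codim}(\mathcal K)=k$ such that $\det_{n,k}(X)=0$ for all $X\in\mathcal K$. Let $B^*\subseteq[n]\times[k]$ be a cobasis of $\mathcal M(\mathcal K)$. If there is $1\le j'\le k$ with $B^*\cap([n]\times\{j'\})=\varnothing$, then $|B^*\cap(\{i\}\times[k])|\le 1$ for all $1\le i\le n$.
   Context: A linear variety is a nonempty set $\mathbf s+V$ with $V$ a linear subspace (uniquely determined); codimension is ambient dimension minus $\dim V$. Identify $M_{n\times k}(\mathbb F)$ with $\mathbb F^{[n]\times[k]}$, $(i,j)$ indexing row $i$, column $j$. Matroid $\mathcal M(\mathcal K)$ of $\mathcal K=\mathbf s+V\subseteq\mathbb F^E$: the matroid on $E$ with rank function $r(S)=\dim\operatorname{span}\{x_e|_V:e\in S\}$, $x_e$ the coordinate functionals. A cobasis is the complement of a basis (maximal independent set). Cullis' determinant: $\det_{n,k}(X)=\sum_{c}\operatorname{sgn}(c)\det(X[c|))$, sum over $k$-subsets $c=\{c(1)<\dots<c(k)\}$ of $[n]$, $X[c|)$ the submatrix of rows in $c$, $\operatorname{sgn}(c)=(-1)^{\sum_\alpha(c(\alpha)-\alpha)}$. *)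

theory Defs
  imports Main "HOL-Library.Function_Algebras" "Jordan_Normal_Form.Determinant"
begin

text \<open>Ground set E = [n] x [k] (1-based: (i,j) = row i, column j).\<close>
definition grid :: "nat \<Rightarrow> nat \<Rightarrow> (nat \<times> nat) set" where
  "grid n k = {1..n} \<times> {1..k}"

text \<open>F^E realised as functions vanishing outside E.\<close>
definition fn_space :: "'b set \<Rightarrow> ('b \<Rightarrow> 'a::zero) set" where
  "fn_space E = {f. \<forall>x. x \<notin> E \<longrightarrow> f x = 0}"

definition fscale :: "'a::field \<Rightarrow> ('b \<Rightarrow> 'a) \<Rightarrow> ('b \<Rightarrow> 'a)" where
  "fscale c f = (\<lambda>x. c * f x)"

definition lin_subspace_of :: "'b set \<Rightarrow> ('b \<Rightarrow> 'a::field) set \<Rightarrow> bool" where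
  "lin_subspace_of E V \<longleftrightarrow> V \<subseteq> fn_space E \<and> module.subspace fscale V"

definition lin_variety :: "'b set \<Rightarrow> ('b \<Rightarrow> 'a::field) \<Rightarrow> ('b \<Rightarrow> 'a) set \<Rightarrow> ('b \<Rightarrow> 'a) set" where
  "lin_variety E s V = (\<lambda>v. s + v) ` V"

definition vdim :: "('b \<Rightarrow> 'a::field) set \<Rightarrow> nat" where
  "vdim V = vector_space.dim fscale V"

definition coord_restr :: "('b \<Rightarrow> 'a::field) set \<Rightarrow> 'b \<Rightarrow> (('b \<Rightarrow> 'a) \<Rightarrow> 'a)" where
  "coord_restr V e = (\<lambda>v. if v \<in> V then v e else 0)"

text \<open>Rank function of the matroid M(K), K = s + V.\<close>
definition mrank :: "('b \<Rightarrow> 'a::field) set \<Rightarrow> 'b set \<Rightarrow> nat" where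
  "mrank V S = vector_space.dim fscale (coord_restr V ` S)"

definition m_indep :: "'b set \<Rightarrow> ('b \<Rightarrow> 'a::field) set \<Rightarrow> 'b set \<Rightarrow> bool" where
  "m_indep E V S \<longleftrightarrow> S \<subseteq> E \<and> mrank V S = card S"

definition m_basis :: "'b set \<Rightarrow> ('b \<Rightarrow> 'a::field) set \<Rightarrow> 'b set \<Rightarrow> bool" where
  "m_basis E V B \<longleftrightarrow> m_indep E V B \<and> (\<forall>S. B \<subset> S \<and> S \<subseteq> E \<longrightarrow> \<not> m_indep E V S)"

definition m_cobasis :: "'b set \<Rightarrow> ('b \<Rightarrow> 'a::field) set \<Rightarrow> 'b set \<Rightarrow> bool" where
  "m_cobasis E V C \<longleftrightarrow> (\<exists>B. m_basis E V B \<and> C = E - B)"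

text \<open>Cullis' determinant of an n x k matrix X (entries X (i,j), 1-based).
  For a k-subset c of [n], c(a+1) = sorted_list_of_set c ! a.\<close>
definition cullis_det :: "nat \<Rightarrow> nat \<Rightarrow> (nat \<times> nat \<Rightarrow> 'a::comm_ring_1) \<Rightarrow> 'a" where
  "cullis_det n k X =
     (\<Sum>c\<in>{c. c \<subseteq> {1..n} \<and> card c = k}.
        (- 1) ^ (\<Sum>a<k. sorted_list_of_set c ! a - (a + 1))
        * det (mat k k (\<lambda>(a, b). X (sorted_list_of_set c ! a, b + 1))))"

end

theory Submission
  imports Defs
begin

definition sh :: "nat \<Rightarrow> nat \<Rightarrow> nat" where "sh i a = (if a < i then a else Suc a)"
definition delrc :: "nat \<Rightarrow> nat \<Rightarrow> (nat \<times> nat \<Rightarrow> 'a) \<Rightarrow> (nat \<times> nat \<Rightarrow> 'a)" where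
  "delrc i j X = (\<lambda>(a,b). X (sh i a, sh j b))"

lemma dropWhile_ge:
  "sorted_wrt (<) xs \<Longrightarrow> x \<in> set (dropWhile (\<lambda>x. x < (i::nat)) xs) \<Longrightarrow> i \<le> x"
proof (induction xs)
  case (Cons a xs)
  then show ?case
    by (cases "a < i") (auto intro: less_imp_le order.trans[of i a x])
qed simp

lemma sign_exp:
  assumes "sorted_wrt (<) xs" "\<forall>x\<in>set xs. (1::nat) \<le> x"
  shows "(\<Sum>a<length xs. xs ! a - (a+1)) + (\<Sum>a<length xs. a+1) = sum_list xs"
proof -
  have s: "sorted_wrt (<) (0 # xs)" using assms by auto
  have ge: "a + 1 \<le> xs ! a" if "a < length xs" for a
    using sorted_wrt_less_idx[OF s, of "Suc a"] that by simp
  have "(\<Sum>a<length xs. xs ! a - (a+1)) + (\<Sum>a<length xs. a+1) = (\<Sum>a<length xs. xs ! a - (a+1) + (a+1))"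
    by (simp only: sum.distrib)
  also have "\<dots> = (\<Sum>a<length xs. xs ! a)"
    by (rule sum.cong) (auto dest: ge)
  also have "\<dots> = sum_list xs" by (simp add: sum_list_sum_nth atLeast0LessThan)
  finally show ?thesis .
qed

lemma sign_pow:
  assumes "sorted_wrt (<) xs" "\<forall>x\<in>set xs. (1::nat) \<le> x"
  shows "((-1::'a::comm_ring_1) ^ (\<Sum>a<length xs. xs ! a - (a+1))) = (-1) ^ (sum_list xs + (\<Sum>a<length xs. a+1))"
proof -
  define E where "E = (\<Sum>a<length xs. xs ! a - (a+1))"
  define T where "T = (\<Sum>a<length xs. a+1)"
  have "sum_list xs + T = E + 2 * T" using sign_exp[OF assms] unfolding E_def T_def by simp
  then have "(-1::'a) ^ (sum_list xs + T) = (-1) ^ E * ((-1) ^ 2) ^ T"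
    by (simp only: power_add power_mult)
  then show ?thesis unfolding E_def[symmetric] T_def[symmetric] by simp
qed

lemma sh_inj: "inj (sh i)"
  unfolding inj_def sh_def by auto

lemma sh_ne: "sh i x \<noteq> i"
  unfolding sh_def by auto

lemma card_ins_sh: "finite c \<Longrightarrow> card (insert i (sh i ` c)) = Suc (card c)"
proof -
  assume "finite c"
  moreover have "i \<notin> sh i ` c" using sh_ne[of i] by (metis imageE)
  moreover have "card (sh i ` c) = card c" using card_image[OF inj_on_subset[OF sh_inj subset_UNIV]] by blast
  ultimately show ?thesis by simp
qed

lemma sl_insert:
  assumes fin: "finite c"
  defines "xs \<equiv> sorted_list_of_set c"
  shows "sorted_list_of_set (insert i (sh i ` c)) =
     takeWhile (\<lambda>x. x < i) xs @ i # map Suc (dropWhile (\<lambda>x. x < i) xs)"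
proof -
  let ?P = "takeWhile (\<lambda>x. x < i) xs" and ?Q = "dropWhile (\<lambda>x. x < i) xs"
  have sxs: "sorted_wrt (<) xs" unfolding xs_def by (rule strict_sorted_list_of_set)
  have setxs: "set xs = c" unfolding xs_def using fin by simp
  have P: "\<forall>x\<in>set ?P. x < i" by (auto dest: set_takeWhileD)
  have Q: "\<forall>x\<in>set ?Q. i \<le> x" using dropWhile_ge[OF sxs] by blast
  have PQ: "set ?P \<union> set ?Q = c" using setxs takeWhile_dropWhile_id[of "\<lambda>x. x < i" xs]
    by (metis set_append)
  have img: "sh i ` c = set ?P \<union> Suc ` set ?Q"
  proof -
    have "sh i ` c = sh i ` set ?P \<union> sh i ` set ?Q" using PQ by auto
    also have "sh i ` set ?P = set ?P" using P by (force simp: sh_def)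
    also have "sh i ` set ?Q = Suc ` set ?Q" using Q by (force simp: sh_def)
    finally show ?thesis .
  qed
  have sP: "sorted_wrt (<) ?P" using sxs by simp
  have sQ: "sorted_wrt (<) ?Q" using sxs by simp
  have s: "sorted_wrt (<) (?P @ i # map Suc ?Q)"
  proof -
    have "sorted_wrt (<) (map Suc ?Q)" using sQ by (simp add: sorted_wrt_map)
    moreover have "\<forall>x\<in>set ?P. \<forall>y\<in>set (map Suc ?Q). x < y" 
    proof (intro ballI)
      fix x y assume "x \<in> set ?P" "y \<in> set (map Suc ?Q)"
      then obtain q where "q \<in> set ?Q" "y = Suc q" "x < i" using P by auto
      then show "x < y" using Q by fastforce
    qed
    moreover have "\<forall>y\<in>set (map Suc ?Q). i < y" using Q by auto
    ultimately have "sorted_wrt (<) (i # map Suc ?Q)" by simp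
    moreover have "\<forall>x\<in>set ?P. \<forall>y\<in>set (i # map Suc ?Q). x < y"
      using P \<open>\<forall>x\<in>set ?P. \<forall>y\<in>set (map Suc ?Q). x < y\<close> by simp
    ultimately show ?thesis using sP unfolding sorted_wrt_append by blast
  qed
  have l: "length (?P @ i # map Suc ?Q) = card (insert i (sh i ` c))"
  proof -
    have "length (?P @ i # map Suc ?Q) = Suc (length xs)"
      using takeWhile_dropWhile_id[of "\<lambda>x. x < i" xs] by (metis length_append length_Cons length_map add_Suc_right)
    also have "length xs = card c" unfolding xs_def by simp
    finally show ?thesis using card_ins_sh[OF fin] by simp
  qed
  show ?thesis
  proof -
    have "set (?P @ i # map Suc ?Q) = insert i (sh i ` c)" using img by auto
    then show ?thesis
      using sorted_list_of_set_unique[of "insert i (sh i ` c)" "?P @ i # map Suc ?Q"] fin s l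
      by simp
  qed
qed

lemma cullis_det_alt:
  "cullis_det n m Y = (\<Sum>c\<in>{c. c \<subseteq> {1..n} \<and> card c = m}.
     (-1) ^ (\<Sum>a<m. sorted_list_of_set c ! a - (a + 1)) *
     det (mat m m (\<lambda>(a, b). Y (sorted_list_of_set c ! a, b + 1))))"
  unfolding cullis_det_def by simp

lemma sum_list_map_Suc: "sum_list (map Suc xs) = sum_list xs + length xs"
  by (induction xs) auto

lemma core_term:
  fixes X :: "nat \<times> nat \<Rightarrow> 'a::comm_ring_1"
  assumes i: "1 \<le> i" "i \<le> n" and j: "1 \<le> j" "j \<le> Suc k"
    and col: "\<forall>r\<in>{1..n}. X (r,j) = (if r = i then 1 else 0)"
    and c': "c' \<subseteq> {1..n-1}" "card c' = k"
  shows "(-1) ^ (\<Sum>a<Suc k. sorted_list_of_set (insert i (sh i ` c')) ! a - (a + 1)) *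
     det (mat (Suc k) (Suc k) (\<lambda>(a, b). X (sorted_list_of_set (insert i (sh i ` c')) ! a, b + 1)))
   = (-1)^(i+j) * ((-1) ^ (\<Sum>a<k. sorted_list_of_set c' ! a - (a + 1)) *
     det (mat k k (\<lambda>(a, b). delrc i j X (sorted_list_of_set c' ! a, b + 1))))"
proof -
  have fin: "finite c'" using c' finite_subset by blast
  define xs where "xs = sorted_list_of_set c'"
  define P where "P = takeWhile (\<lambda>x. x < i) xs"
  define Q where "Q = dropWhile (\<lambda>x. x < i) xs"
  define \<alpha> where "\<alpha> = length P"
  define c where "c = insert i (sh i ` c')"
  define ys where "ys = sorted_list_of_set c"
  have ys: "ys = P @ i # map Suc Q" unfolding ys_def c_def P_def Q_def xs_def using sl_insert[OF fin] by simp
  have xsPQ: "xs = P @ Q" unfolding P_def Q_def by simp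
  have sxs: "sorted_wrt (<) xs" unfolding xs_def by (rule strict_sorted_list_of_set)
  have setxs: "set xs = c'" unfolding xs_def using fin by simp
  have lxs: "length xs = k" unfolding xs_def using c' by simp
  have lPQ: "\<alpha> + length Q = k" using lxs xsPQ \<alpha>_def by (metis length_append)
  have finc: "finite c" unfolding c_def using fin by simp
  have cardc: "card c = Suc k" unfolding c_def using card_ins_sh[OF fin] c' by simp
  have lys: "length ys = Suc k" unfolding ys_def using cardc by simp
  have csub: "c \<subseteq> {1..n}" unfolding c_def using c' i by (auto simp: sh_def)
  have setys: "set ys = c" unfolding ys_def using finc by simp
  have sys: "sorted_wrt (<) ys" unfolding ys_def by (rule strict_sorted_list_of_set)
  have dys: "distinct ys" unfolding ys_def by simp
  have Pl: "\<forall>x\<in>set P. x < i" unfolding P_def by (auto dest: set_takeWhileD)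
  have Qg: "\<forall>x\<in>set Q. i \<le> x" unfolding Q_def using dropWhile_ge[OF sxs] by blast
  have ys\<alpha>: "ys ! \<alpha> = i" unfolding ys \<alpha>_def by simp
  have al: "\<alpha> < Suc k" using lPQ by simp
  have yi: "ys ! a = i \<longleftrightarrow> a = \<alpha>" if "a < Suc k" for a
    using nth_eq_iff_index_eq[OF dys, of a \<alpha>] that al lys ys\<alpha> by auto
  have ysn: "ys ! a \<in> {1..n}" if "a < Suc k" for a
    using nth_mem[of a ys] that lys setys csub by auto
  have ysb: "ys ! (if a < \<alpha> then a else Suc a) = sh i (xs ! a)" if "a < k" for a
  proof (cases "a < \<alpha>")
    case True
    then have "ys ! a = P ! a" unfolding ys \<alpha>_def by (simp add: nth_append)
    moreover have "xs ! a = P ! a" using True unfolding xsPQ \<alpha>_def by (simp add: nth_append)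
    moreover have "P ! a < i" using Pl True \<alpha>_def nth_mem by blast
    ultimately show ?thesis using True by (simp add: sh_def)
  next
    case False
    have aQ: "a - \<alpha> < length Q" using False that lPQ by simp
    have "ys ! Suc a = Suc (Q ! (a - \<alpha>))" using False aQ unfolding ys \<alpha>_def
      by (simp add: nth_append Suc_diff_le)
    moreover have "xs ! a = Q ! (a - \<alpha>)" using False unfolding xsPQ \<alpha>_def by (simp add: nth_append)
    moreover have "i \<le> Q ! (a - \<alpha>)" using Qg aQ nth_mem by blast
    ultimately show ?thesis using False by (simp add: sh_def)
  qed
  define M where "M = mat (Suc k) (Suc k) (\<lambda>(a, b). X (ys ! a, b + 1))"
  have Mc: "M \<in> carrier_mat (Suc k) (Suc k)" unfolding M_def by simp
  have jk: "j - 1 < Suc k" using j by simp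
  have Mcol: "M $$ (a, j - 1) = (if a = \<alpha> then 1 else 0)" if "a < Suc k" for a
  proof -
    have "M $$ (a, j - 1) = X (ys ! a, j)" unfolding M_def using that jk j by simp
    also have "\<dots> = (if ys ! a = i then 1 else 0)" using col ysn[OF that] by simp
    finally show ?thesis using yi[OF that] by simp
  qed
  have "det M = (\<Sum>a<Suc k. M $$ (a, j - 1) * cofactor M a (j - 1))"
    by (rule laplace_expansion_column[OF Mc jk])
  also have "\<dots> = (\<Sum>a<Suc k. (if a = \<alpha> then cofactor M a (j - 1) else 0))"
  proof (rule sum.cong[OF refl])
    fix a assume "a \<in> {..<Suc k}"
    then show "M $$ (a, j - 1) * cofactor M a (j - 1) = (if a = \<alpha> then cofactor M a (j - 1) else 0)"
      using Mcol[of a] by simp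
  qed
  also have "\<dots> = cofactor M \<alpha> (j - 1)" using al by simp
  finally have dM: "det M = (-1)^(\<alpha> + (j - 1)) * det (mat_delete M \<alpha> (j - 1))"
    unfolding cofactor_def .
  have MD: "mat_delete M \<alpha> (j - 1) = mat k k (\<lambda>(a, b). delrc i j X (xs ! a, b + 1))"
  proof (rule eq_matI)
    fix a b assume ab: "a < dim_row (mat k k (\<lambda>(a, b). delrc i j X (xs ! a, b + 1)))"
       "b < dim_col (mat k k (\<lambda>(a, b). delrc i j X (xs ! a, b + 1)))"
    then have a: "a < k" and b: "b < k" by auto
    have r: "(if a < \<alpha> then a else Suc a) < Suc k" "(if b < j - 1 then b else Suc b) < Suc k"
      using a b by auto
    have "mat_delete M \<alpha> (j - 1) $$ (a, b) =
        M $$ (if a < \<alpha> then a else Suc a, if b < j - 1 then b else Suc b)"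
      unfolding mat_delete_def using a b Mc by simp
    also have "\<dots> = X (ys ! (if a < \<alpha> then a else Suc a), (if b < j - 1 then b else Suc b) + 1)"
      unfolding M_def using r by simp
    also have "\<dots> = X (sh i (xs ! a), sh j (b + 1))"
    proof -
      have e: "(if b < j - 1 then b else Suc b) + 1 = sh j (b + 1)" unfolding sh_def using j by auto
      show ?thesis by (simp only: ysb[OF a] e)
    qed
    finally show "mat_delete M \<alpha> (j - 1) $$ (a, b) = mat k k (\<lambda>(a, b). delrc i j X (xs ! a, b + 1)) $$ (a, b)"
      using a b by (simp add: delrc_def)
  qed (use Mc in auto)
  have ys1: "\<forall>x\<in>set ys. 1 \<le> x" using setys csub by auto
  have xs1: "\<forall>x\<in>set xs. 1 \<le> x" using setxs c' by auto
  have sg1: "((-1::'a) ^ (\<Sum>a<Suc k. ys ! a - (a+1))) = (-1) ^ (sum_list ys + (\<Sum>a<Suc k. a+1))"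
    using sign_pow[OF sys ys1] lys by simp
  have sg2: "((-1::'a) ^ (\<Sum>a<k. xs ! a - (a+1))) = (-1) ^ (sum_list xs + (\<Sum>a<k. a+1))"
    using sign_pow[OF sxs xs1] lxs by simp
  have sl: "sum_list ys = sum_list xs + i + length Q"
    unfolding ys xsPQ by (simp add: sum_list_map_Suc)
  define T where "T = (\<Sum>a<k. a+1)"
  have T1: "(\<Sum>a<Suc k. a+1) = T + Suc k" unfolding T_def by simp
  have ex: "sum_list ys + (\<Sum>a<Suc k. a+1) + (\<alpha> + (j - 1)) = (i + j + (sum_list xs + T)) + 2 * k"
    using sl T1 lPQ j by simp
  have "(-1::'a) ^ (sum_list ys + (\<Sum>a<Suc k. a+1)) * (-1)^(\<alpha> + (j - 1))
      = (-1) ^ (i + j + (sum_list xs + T)) * ((-1)^2)^k"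
    unfolding power_add[symmetric] power_mult[symmetric] ex ..
  then have "(-1::'a) ^ (sum_list ys + (\<Sum>a<Suc k. a+1)) * (-1)^(\<alpha> + (j - 1))
      = (-1)^(i+j) * (-1) ^ (sum_list xs + T)"
    by (simp add: power_add)
  then show ?thesis
    unfolding c_def[symmetric] ys_def[symmetric] xs_def[symmetric] M_def[symmetric]
    unfolding sg1 sg2 dM MD T_def[symmetric]
    by (metis (no_types, lifting) mult.assoc)
qed

lemma cullis_laplace:
  fixes X :: "nat \<times> nat \<Rightarrow> 'a::comm_ring_1"
  assumes i: "1 \<le> i" "i \<le> n" and j: "1 \<le> j" "j \<le> Suc k"
    and col: "\<forall>r\<in>{1..n}. X (r,j) = (if r = i then 1 else 0)"
  shows "cullis_det n (Suc k) X = (-1)^(i+j) * cullis_det (n-1) k (delrc i j X)"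
proof -
  define f where "f = (\<lambda>c. (-1::'a) ^ (\<Sum>a<Suc k. sorted_list_of_set c ! a - (a + 1)) *
     det (mat (Suc k) (Suc k) (\<lambda>(a, b). X (sorted_list_of_set c ! a, b + 1))))"
  define g where "g = (\<lambda>c. (-1::'a) ^ (\<Sum>a<k. sorted_list_of_set c ! a - (a + 1)) *
     det (mat k k (\<lambda>(a, b). delrc i j X (sorted_list_of_set c ! a, b + 1))))"
  define C where "C = {c. c \<subseteq> {1..n} \<and> card c = Suc k}"
  define C1 where "C1 = {c. c \<subseteq> {1..n} \<and> card c = Suc k \<and> i \<in> c}"
  define C' where "C' = {c. c \<subseteq> {1..n-1} \<and> card c = k}"
  define \<phi> where "\<phi> = (\<lambda>c'. insert i (sh i ` c'))"
  define ush where "ush = (\<lambda>x::nat. if x < i then x else x - 1)"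
  define \<psi> where "\<psi> = (\<lambda>c. ush ` (c - {i}))"
  have finC: "finite C" unfolding C_def by (rule finite_subset[of _ "Pow {1..n}"]) auto
  have jk: "j - 1 < Suc k" using j by simp
  have zero: "f c = 0" if "c \<in> C - C1" for c
  proof -
    define ys where "ys = sorted_list_of_set c"
    have c: "c \<subseteq> {1..n}" "card c = Suc k" "i \<notin> c" using that unfolding C_def C1_def by auto
    have fin: "finite c" using c(1) finite_subset by blast
    define M where "M = mat (Suc k) (Suc k) (\<lambda>(a, b). X (ys ! a, b + 1))"
    have Mc: "M \<in> carrier_mat (Suc k) (Suc k)" unfolding M_def by simp
    have "M $$ (a, j - 1) = 0" if "a < Suc k" for a
    proof -
      have "ys ! a \<in> c" using nth_mem[of a ys] that fin c unfolding ys_def by simp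
      then have "X (ys ! a, j) = 0" using col c by auto
      then show ?thesis unfolding M_def using that jk j by simp
    qed
    then have "det M = 0" using laplace_expansion_column[OF Mc jk] by simp
    then show ?thesis unfolding f_def ys_def[symmetric] M_def[symmetric] by simp
  qed
  have "cullis_det n (Suc k) X = sum f C" unfolding cullis_det_alt f_def C_def ..
  also have "\<dots> = sum f C1"
  proof -
    have sub: "C1 \<subseteq> C" unfolding C_def C1_def by blast
    show ?thesis by (rule sum.mono_neutral_right[OF finC sub]) (rule ballI, rule zero)
  qed
  also have "\<dots> = sum (\<lambda>c'. f (\<phi> c')) C'"
  proof -
    have A1: "\<phi> (\<psi> c) = c" if c: "c \<in> C1" for c
    proof -
      have "sh i (ush x) = x" if "x \<in> c - {i}" for x
        using that unfolding sh_def ush_def by auto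
      then have "sh i ` \<psi> c = c - {i}" unfolding \<psi>_def image_image by simp
      moreover have "i \<in> c" using c C1_def by simp
      ultimately show "\<phi> (\<psi> c) = c" unfolding \<phi>_def by (simp add: insert_absorb)
    qed
    have A2: "\<psi> c \<in> C'" if c: "c \<in> C1" for c
    proof -
      have inj: "inj_on ush (c - {i})" unfolding inj_on_def ush_def by auto
      have cs: "c \<subseteq> {1..n}" "card c = Suc k" "i \<in> c" using c C1_def by auto
      have finc: "finite c" using cs(1) by (rule finite_subset) simp
      have "card (\<psi> c) = k" unfolding \<psi>_def card_image[OF inj] using cs finc
        by (simp add: card_Diff_singleton)
      moreover have "\<psi> c \<subseteq> {1..n-1}"
      proof
        fix y assume "y \<in> \<psi> c"
        then obtain x where x: "x \<in> c" "x \<noteq> i" "y = ush x" unfolding \<psi>_def by auto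
        then have "x \<in> {1..n}" using cs(1) by blast
        then show "y \<in> {1..n-1}" using x i unfolding ush_def by auto
      qed
      ultimately show "\<psi> c \<in> C'" unfolding C'_def by simp
    qed
    have A3: "\<psi> (\<phi> c') = c'" for c'
    proof -
      have "ush (sh i x) = x" for x unfolding ush_def sh_def by auto
      moreover have "\<phi> c' - {i} = sh i ` c'" unfolding \<phi>_def using sh_ne[of i] by auto
      ultimately show "\<psi> (\<phi> c') = c'" unfolding \<psi>_def by (simp add: image_image)
    qed
    have A4: "\<phi> c' \<in> C1" if c': "c' \<in> C'" for c'
    proof -
      have cs: "c' \<subseteq> {1..n-1}" "card c' = k" using c' C'_def by auto
      have fin: "finite c'" using cs(1) by (rule finite_subset) simp
      have "card (\<phi> c') = Suc k" unfolding \<phi>_def using card_ins_sh[OF fin] cs by simp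
      moreover have "\<phi> c' \<subseteq> {1..n}" unfolding \<phi>_def using cs i by (auto simp: sh_def)
      ultimately show "\<phi> c' \<in> C1" unfolding C1_def \<phi>_def by simp
    qed
    show ?thesis
      apply (rule sum.reindex_bij_witness[of C1 \<phi> \<psi>])
          apply (erule A1)
         apply (erule A2)
        apply (rule A3)
       apply (erule A4)
      apply (simp only: A1)
      done
  qed
  also have "\<dots> = sum (\<lambda>c'. (-1)^(i+j) * g c') C'"
  proof (rule sum.cong[OF refl])
    fix c' assume "c' \<in> C'"
    then show "f (\<phi> c') = (-1)^(i+j) * g c'"
      unfolding f_def g_def \<phi>_def C'_def using core_term[OF i j col] by simp
  qed
  also have "\<dots> = (-1)^(i+j) * cullis_det (n-1) k (delrc i j X)"
    unfolding cullis_det_alt g_def C'_def sum_distrib_left ..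
  finally show ?thesis .
qed


lemma vs_fscale: "vector_space (fscale :: 'a::field \<Rightarrow> ('b \<Rightarrow> 'a) \<Rightarrow> ('b \<Rightarrow> 'a))"
  unfolding vector_space_def fscale_def by (auto simp: fun_eq_iff algebra_simps)

lemma sum_fun_app: "(sum f A) x = (\<Sum>a\<in>A. f a x)" for f :: "'c \<Rightarrow> 'b \<Rightarrow> 'a::comm_monoid_add"
  by (induction A rule: infinite_finite_induct) auto

lemma sum_in:
  fixes V :: "('b \<Rightarrow> 'a::field) set"
  assumes zero: "0 \<in> V" and add: "\<And>x y. x \<in> V \<Longrightarrow> y \<in> V \<Longrightarrow> x + y \<in> V"
  shows "finite A \<Longrightarrow> (\<forall>b\<in>A. f b \<in> V) \<Longrightarrow> sum f A \<in> V"
  by (induction A rule: finite_induct) (auto simp: zero add)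

lemma dual_basis:
  fixes V :: "('b \<Rightarrow> 'a::field) set"
  assumes zero: "0 \<in> V" and add: "\<And>x y. x \<in> V \<Longrightarrow> y \<in> V \<Longrightarrow> x + y \<in> V"
   and smul: "\<And>c x. x \<in> V \<Longrightarrow> (\<lambda>e. c * x e) \<in> V"
  shows "finite B \<Longrightarrow> (\<forall>\<mu>. (\<forall>v\<in>V. (\<Sum>b\<in>B. \<mu> b * v b) = 0) \<longrightarrow> (\<forall>b\<in>B. \<mu> b = 0)) \<Longrightarrow>
     \<exists>w. \<forall>b\<in>B. w b \<in> V \<and> w b b = 1 \<and> (\<forall>b'\<in>B. b' \<noteq> b \<longrightarrow> w b b' = 0)"
proof (induction B rule: finite_induct)
  case empty show ?case by simp
next
  case (insert x F)
  have indF: "\<forall>\<mu>. (\<forall>v\<in>V. (\<Sum>b\<in>F. \<mu> b * v b) = 0) \<longrightarrow> (\<forall>b\<in>F. \<mu> b = 0)"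
  proof (intro allI impI)
    fix \<mu> assume h: "\<forall>v\<in>V. (\<Sum>b\<in>F. \<mu> b * v b) = 0"
    let ?\<mu> = "\<mu>(x := 0)"
    have "(\<Sum>b\<in>insert x F. ?\<mu> b * v b) = 0" if "v \<in> V" for v
    proof -
      have "(\<Sum>b\<in>insert x F. ?\<mu> b * v b) = (\<Sum>b\<in>F. ?\<mu> b * v b)"
        using insert.hyps by simp
      also have "\<dots> = (\<Sum>b\<in>F. \<mu> b * v b)"
        by (rule sum.cong) (use insert.hyps in auto)
      finally show ?thesis using h that by simp
    qed
    then have "\<forall>b\<in>insert x F. ?\<mu> b = 0" using insert.prems by blast
    then show "\<forall>b\<in>F. \<mu> b = 0" using insert.hyps by (metis fun_upd_other insertCI)
  qed
  obtain w where w: "\<forall>b\<in>F. w b \<in> V \<and> w b b = 1 \<and> (\<forall>b'\<in>F. b' \<noteq> b \<longrightarrow> w b b' = 0)"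
    using insert.IH indF by blast
  have delta: "(\<Sum>b\<in>F. c b * w b b') = c b'" if "b' \<in> F" for c b'
  proof -
    have "(\<Sum>b\<in>F. c b * w b b') = (\<Sum>b\<in>F. if b = b' then c b else 0)"
      by (rule sum.cong) (use w that in auto)
    also have "\<dots> = c b'" using that insert.hyps by simp
    finally show ?thesis .
  qed
  have "\<exists>u\<in>V. (\<forall>b\<in>F. u b = 0) \<and> u x \<noteq> 0"
  proof (rule ccontr)
    assume "\<not> ?thesis"
    then have H: "\<And>u. u \<in> V \<Longrightarrow> \<forall>b\<in>F. u b = 0 \<Longrightarrow> u x = 0" by blast
    define \<mu> where "\<mu> = (\<lambda>b. if b = x then -1 else w b x)"
    have "\<forall>v\<in>V. (\<Sum>b\<in>insert x F. \<mu> b * v b) = 0"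
    proof
      fix v assume v: "v \<in> V"
      define p where "p = (\<Sum>b\<in>F. (\<lambda>e. v b * w b e))"
      have pV: "p \<in> V" unfolding p_def
        by (rule sum_in[OF zero add insert.hyps(1)]) (use w smul in auto)
      define u where "u = v + (\<lambda>e. -1 * p e)"
      have uV: "u \<in> V" unfolding u_def using add[OF v smul[OF pV, of "-1"]] by simp
      have pe: "p e = (\<Sum>b\<in>F. v b * w b e)" for e unfolding p_def sum_fun_app ..
      have "\<forall>b\<in>F. u b = 0" unfolding u_def using delta[of _ v] by (simp add: pe)
      then have "u x = 0" using H uV by blast
      then have vx: "v x = (\<Sum>b\<in>F. v b * w b x)" unfolding u_def by (simp add: pe)
      have "(\<Sum>b\<in>insert x F. \<mu> b * v b) = - v x + (\<Sum>b\<in>F. \<mu> b * v b)"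
        using insert.hyps by (simp add: \<mu>_def)
      also have "(\<Sum>b\<in>F. \<mu> b * v b) = (\<Sum>b\<in>F. v b * w b x)"
        by (rule sum.cong) (use insert.hyps in \<open>auto simp: \<mu>_def\<close>)
      finally show "(\<Sum>b\<in>insert x F. \<mu> b * v b) = 0" using vx by simp
    qed
    then have "\<mu> x = 0" using insert.prems by blast
    then show False by (simp add: \<mu>_def)
  qed
  then obtain u where u: "u \<in> V" "\<forall>b\<in>F. u b = 0" "u x \<noteq> 0" by blast
  define u' where "u' = (\<lambda>e. inverse (u x) * u e)"
  have u': "u' \<in> V" "\<forall>b\<in>F. u' b = 0" "u' x = 1" using u smul unfolding u'_def by auto
  define w' where "w' = (\<lambda>b. if b = x then u' else w b + (\<lambda>e. - (w b x) * u' e))"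
  have "\<forall>b\<in>insert x F. w' b \<in> V \<and> w' b b = 1 \<and> (\<forall>b'\<in>insert x F. b' \<noteq> b \<longrightarrow> w' b b' = 0)"
  proof
    fix b assume b: "b \<in> insert x F"
    show "w' b \<in> V \<and> w' b b = 1 \<and> (\<forall>b'\<in>insert x F. b' \<noteq> b \<longrightarrow> w' b b' = 0)"
    proof (cases "b = x")
      case True
      then show ?thesis unfolding w'_def using u' by auto
    next
      case False
      then have bF: "b \<in> F" using b by simp
      have "w' b \<in> V" unfolding w'_def using False add[of "w b", OF _ smul[OF u'(1), of "- w b x"]] w bF by auto
      moreover have "w' b b = 1" unfolding w'_def using False w bF u' by auto
      moreover have "\<forall>b'\<in>insert x F. b' \<noteq> b \<longrightarrow> w' b b' = 0"
        unfolding w'_def using False w bF u' by auto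
      ultimately show ?thesis by blast
    qed
  qed
  then show ?case by blast
qed

lemma LA_main:
  fixes V :: "('b \<Rightarrow> 'a::field) set" and E B :: "'b set"
  assumes sub: "lin_subspace_of E V" and finE: "finite E" and basis: "m_basis E V B"
  shows "(\<forall>s y. \<exists>v\<in>V. \<forall>b\<in>B. s b + v b = y b) \<and> vdim V \<le> card B"
proof -
  interpret V1: vector_space "fscale :: 'a \<Rightarrow> ('b \<Rightarrow> 'a) \<Rightarrow> _" by (rule vs_fscale)
  interpret V2: vector_space "fscale :: 'a \<Rightarrow> (('b \<Rightarrow> 'a) \<Rightarrow> 'a) \<Rightarrow> _" by (rule vs_fscale)
  have Vfn: "V \<subseteq> fn_space E" and ss: "V1.subspace V" using sub unfolding lin_subspace_of_def by auto
  have zero: "0 \<in> V" using ss unfolding V1.subspace_def by simp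
  have add: "\<And>x y. x \<in> V \<Longrightarrow> y \<in> V \<Longrightarrow> x + y \<in> V" using ss unfolding V1.subspace_def by simp
  have smul: "\<And>c x. x \<in> V \<Longrightarrow> (\<lambda>e. c * x e) \<in> V"
    using ss unfolding V1.subspace_def fscale_def by simp
  define D where "D = coord_restr V"
  have BE: "B \<subseteq> E" and rk: "V2.dim (D ` B) = card B"
    using basis unfolding m_basis_def m_indep_def mrank_def D_def by auto
  have finB: "finite B" using BE finE finite_subset by blast
  have finDB: "finite (D ` B)" using finB by simp
  have le1: "V2.dim (D ` B) \<le> card (D ` B)" by (rule V2.dim_le_card[OF V2.span_superset finDB])
  have le2: "card (D ` B) \<le> card B" by (rule card_image_le[OF finB])
  have cardDB: "card (D ` B) = card B" using le1 le2 rk by simp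
  have inj: "inj_on D B" by (rule eq_card_imp_inj_on[OF finB cardDB])
  have indep: "\<not> V2.dependent (D ` B)"
  proof
    assume "V2.dependent (D ` B)"
    then obtain a where a: "a \<in> D ` B" "a \<in> V2.span (D ` B - {a})" unfolding V2.dependent_def by blast
    have "V2.span (D ` B) = V2.span (D ` B - {a})"
      using V2.span_redundant[OF a(2)] a(1) by (simp add: insert_absorb)
    then have "V2.dim (D ` B) = V2.dim (D ` B - {a})" by (rule V2.span_eq_dim)
    also have "\<dots> \<le> card (D ` B - {a})" by (rule V2.dim_le_card[OF V2.span_superset]) (use finDB in simp)
    also have "\<dots> < card (D ` B)" using a(1) finDB by (metis card_Diff1_less)
    finally show False using rk cardDB by simp
  qed
  have Dv: "D b v = v b" if "v \<in> V" for b v unfolding D_def coord_restr_def using that by simp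
  have sumD: "(\<Sum>x\<in>D ` B. fscale (u x) x) v = (\<Sum>b\<in>B. u (D b) * D b v)" for u v
  proof -
    have "(\<Sum>x\<in>D ` B. fscale (u x) x) v = (\<Sum>x\<in>D ` B. u x * x v)"
      unfolding sum_fun_app fscale_def ..
    also have "\<dots> = (\<Sum>b\<in>B. u (D b) * D b v)" by (subst sum.reindex[OF inj]) simp
    finally show ?thesis .
  qed
  have cind: "\<forall>\<mu>. (\<forall>v\<in>V. (\<Sum>b\<in>B. \<mu> b * v b) = 0) \<longrightarrow> (\<forall>b\<in>B. \<mu> b = 0)"
  proof (intro allI impI)
    fix \<mu> assume h: "\<forall>v\<in>V. (\<Sum>b\<in>B. \<mu> b * v b) = 0"
    define u where "u = (\<lambda>x. \<mu> (inv_into B D x))"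
    have uD: "u (D b) = \<mu> b" if "b \<in> B" for b unfolding u_def using inv_into_f_f[OF inj that] by simp
    have "(\<Sum>x\<in>D ` B. fscale (u x) x) = 0"
    proof
      fix v
      have "(\<Sum>x\<in>D ` B. fscale (u x) x) v = (\<Sum>b\<in>B. u (D b) * D b v)" by (rule sumD)
      also have "\<dots> = (\<Sum>b\<in>B. \<mu> b * D b v)" by (rule sum.cong) (simp_all add: uD)
      also have "\<dots> = 0"
      proof (cases "v \<in> V")
        case True
        then show ?thesis using h by (simp add: Dv)
      next
        case False
        then show ?thesis by (simp add: D_def coord_restr_def)
      qed
      finally show "(\<Sum>x\<in>D ` B. fscale (u x) x) v = 0 v" by simp
    qed
    then have s0: "(\<Sum>v\<in>D ` B. fscale (u v) v) = 0" .
    have "\<forall>x\<in>D ` B. u x = 0"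
    proof (rule ccontr)
      assume "\<not> (\<forall>x\<in>D ` B. u x = 0)"
      then have ex: "\<exists>v\<in>D ` B. u v \<noteq> 0" by blast
      have "V2.dependent (D ` B)"
        unfolding V2.dependent_finite[OF finDB] by (intro exI[of _ u] conjI ex s0)
      then show False using indep by contradiction
    qed
    then show "\<forall>b\<in>B. \<mu> b = 0" using uD by (metis imageI)
  qed
  obtain w where w: "\<forall>b\<in>B. w b \<in> V \<and> w b b = 1 \<and> (\<forall>b'\<in>B. b' \<noteq> b \<longrightarrow> w b b' = 0)"
    using dual_basis[OF zero add smul finB cind] by blast
  have delta: "(\<Sum>b\<in>B. c b * w b b') = c b'" if "b' \<in> B" for c b'
  proof -
    have "(\<Sum>b\<in>B. c b * w b b') = (\<Sum>b\<in>B. if b = b' then c b else 0)"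
      by (rule sum.cong) (use w that in auto)
    also have "\<dots> = c b'" using that finB by simp
    finally show ?thesis .
  qed
  have rep: "\<exists>\<mu>. \<forall>v\<in>V. v e = (\<Sum>b\<in>B. \<mu> b * v b)" if e: "e \<in> E" for e
  proof (cases "e \<in> B")
    case True
    show ?thesis
      by (rule exI[of _ "\<lambda>b. if b = e then 1 else 0"]) (use True finB in \<open>simp add: if_distrib[of "\<lambda>c. c * _"] cong: if_cong\<close>)
  next
    case False
    have notind: "\<not> m_indep E V (insert e B)"
    proof -
      have "B \<subset> insert e B" "insert e B \<subseteq> E" using False e BE by auto
      then show ?thesis using basis unfolding m_basis_def by blast
    qed
    have "D e \<in> V2.span (D ` B)"
    proof (rule ccontr)
      assume ns: "D e \<notin> V2.span (D ` B)"
      have ind2: "\<not> V2.dependent (insert (D e) (D ` B))" by (rule V2.independent_insertI[OF ns indep])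
      have "D e \<notin> D ` B" using ns V2.span_base by blast
      then have "card (D ` insert e B) = Suc (card B)" using finDB cardDB by simp
      moreover have "V2.dim (D ` insert e B) = card (D ` insert e B)"
        using V2.dim_eq_card_independent[OF ind2] by simp
      ultimately have "mrank V (insert e B) = card (insert e B)"
        unfolding mrank_def D_def[symmetric] using False finB by simp
      then show False using notind e BE unfolding m_indep_def by simp
    qed
    then obtain u where u: "D e = (\<Sum>x\<in>D ` B. fscale (u x) x)"
      using V2.span_finite[OF finDB] by blast
    show ?thesis
    proof (intro exI ballI)
      fix v assume v: "v \<in> V"
      have "v e = D e v" using Dv[OF v] by simp
      also have "\<dots> = (\<Sum>b\<in>B. u (D b) * D b v)" unfolding u by (rule sumD)
      also have "\<dots> = (\<Sum>b\<in>B. u (D b) * v b)" using v by (simp add: Dv)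
      finally show "v e = (\<Sum>b\<in>B. (u \<circ> D) b * v b)" by simp
    qed
  qed
  have free: "\<forall>s y. \<exists>v\<in>V. \<forall>b\<in>B. s b + v b = y b"
  proof (intro allI)
    fix s y :: "'b \<Rightarrow> 'a"
    define v where "v = (\<Sum>b\<in>B. (\<lambda>e. (y b - s b) * w b e))"
    have "v \<in> V" unfolding v_def by (rule sum_in[OF zero add finB]) (use w smul in auto)
    moreover have "v b' = y b' - s b'" if "b' \<in> B" for b'
      unfolding v_def sum_fun_app using delta[OF that, of "\<lambda>b. y b - s b"] .
    ultimately show "\<exists>v\<in>V. \<forall>b\<in>B. s b + v b = y b" by (intro bexI[of _ v] ballI) simp_all
  qed
  have "V \<subseteq> V1.span (w ` B)"
  proof
    fix v assume v: "v \<in> V"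
    define p where "p = (\<Sum>b\<in>B. (\<lambda>e. v b * w b e))"
    have pV: "p \<in> V" unfolding p_def by (rule sum_in[OF zero add finB]) (use w smul in auto)
    have pe: "p e = (\<Sum>b\<in>B. v b * w b e)" for e unfolding p_def sum_fun_app ..
    define d where "d = v + (\<lambda>e. -1 * p e)"
    have dV: "d \<in> V" unfolding d_def using add[OF v smul[OF pV, of "-1"]] by simp
    have dB: "\<forall>b\<in>B. d b = 0" unfolding d_def using delta[of _ v] by (simp add: pe)
    have "d = 0"
    proof
      fix e
      show "d e = 0 e"
      proof (cases "e \<in> E")
        case True
        then obtain \<mu> where "\<forall>v\<in>V. v e = (\<Sum>b\<in>B. \<mu> b * v b)" using rep by blast
        then have "d e = (\<Sum>b\<in>B. \<mu> b * d b)" using dV by blast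
        then show ?thesis using dB by simp
      next
        case False
        then show ?thesis using dV Vfn unfolding fn_space_def by auto
      qed
    qed
    then have "v = p" unfolding d_def by (auto simp: fun_eq_iff)
    also have "p = (\<Sum>b\<in>B. fscale (v b) (w b))" unfolding p_def fscale_def ..
    also have "\<dots> \<in> V1.span (w ` B)"
      by (rule V1.span_sum) (intro V1.span_scale V1.span_base, simp)
    finally show "v \<in> V1.span (w ` B)" .
  qed
  then have "V1.dim V \<le> card (w ` B)" by (rule V1.dim_le_card) (use finB in simp)
  also have "\<dots> \<le> card B" by (rule card_image_le[OF finB])
  finally have "vdim V \<le> card B" unfolding vdim_def .
  with free show ?thesis by blast
qed


definition freeset :: "(nat \<times> nat \<Rightarrow> 'a) set \<Rightarrow> (nat \<times> nat) set \<Rightarrow> (nat \<times> nat) set \<Rightarrow> bool" where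
  "freeset K E N \<longleftrightarrow> (\<forall>y. \<exists>X\<in>K. \<forall>e\<in>E - N. X e = y e)"

lemma reduce:
  fixes K :: "(nat \<times> nat \<Rightarrow> 'a::field) set"
  assumes fr: "freeset K (grid n (Suc k)) N" and Nsub: "N \<subseteq> grid n (Suc k)"
    and i: "1 \<le> i" "i \<le> n" and j: "1 \<le> j" "j \<le> Suc k" and colfree: "\<forall>r. (r,j) \<notin> N"
  defines "K' \<equiv> {delrc i j X | X. X \<in> K \<and> (\<forall>r\<in>{1..n}. X (r,j) = (if r = i then 1 else 0))}"
    and "N' \<equiv> {e \<in> grid (n-1) k. (sh i (fst e), sh j (snd e)) \<in> N}"
  shows "freeset K' (grid (n-1) k) N' \<and> N' \<subseteq> grid (n-1) k \<and> card N' + card (N \<inter> ({i} \<times> UNIV)) \<le> card N"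
proof (intro conjI)
  show "N' \<subseteq> grid (n-1) k" unfolding N'_def by auto
  define ush where "ush = (\<lambda>i r::nat. if r < i then r else r - 1)"
  have ush: "ush t (sh t a) = a" for t a unfolding ush_def sh_def by auto
  have shr: "sh t a \<in> {1..m}" if "a \<in> {1..m-1}" "1 \<le> t" for t a m
    using that unfolding sh_def by auto
  show "freeset K' (grid (n-1) k) N'"
    unfolding freeset_def
  proof
    fix y' :: "nat \<times> nat \<Rightarrow> 'a"
    define y where "y = (\<lambda>(r,c). if c = j then (if r = i then 1 else 0) else y' (ush i r, ush j c))"
    obtain X where X: "X \<in> K" "\<forall>e\<in>grid n (Suc k) - N. X e = y e" using fr unfolding freeset_def by blast
    have col: "\<forall>r\<in>{1..n}. X (r,j) = (if r = i then 1 else 0)"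
    proof
      fix r assume r: "r \<in> {1..n}"
      then have "(r,j) \<in> grid n (Suc k) - N" using j colfree unfolding grid_def by auto
      then show "X (r,j) = (if r = i then 1 else 0)" using X unfolding y_def by auto
    qed
    have inK: "delrc i j X \<in> K'" unfolding K'_def using X(1) col by blast
    have "\<forall>e\<in>grid (n-1) k - N'. delrc i j X e = y' e"
    proof
      fix e assume e: "e \<in> grid (n-1) k - N'"
      obtain a b where ab: "e = (a,b)" by (cases e)
      have a: "a \<in> {1..n-1}" and b: "b \<in> {1..Suc k - 1}" using e ab unfolding grid_def by auto
      have "(sh i a, sh j b) \<notin> N" using e ab unfolding N'_def by auto
      moreover have "(sh i a, sh j b) \<in> grid n (Suc k)"
        unfolding grid_def using shr[OF a i(1)] shr[OF b j(1)] by auto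
      ultimately have "X (sh i a, sh j b) = y (sh i a, sh j b)" using X by blast
      also have "\<dots> = y' (a, b)" unfolding y_def using sh_ne[of j b] by (simp add: ush)
      finally show "delrc i j X e = y' e" unfolding ab delrc_def by simp
    qed
    then show "\<exists>X\<in>K'. \<forall>e\<in>grid (n-1) k - N'. X e = y' e" using inK by blast
  qed
  have finN: "finite N" using Nsub by (rule finite_subset) (simp add: grid_def)
  define g where "g = (\<lambda>e::nat\<times>nat. (sh i (fst e), sh j (snd e)))"
  have injg: "inj_on g N'" unfolding g_def inj_on_def by (auto simp: inj_eq[OF sh_inj] prod_eq_iff)
  have gsub: "g ` N' \<subseteq> N - N \<inter> ({i} \<times> UNIV)" unfolding g_def N'_def using sh_ne[of i] by auto
  have "card N' = card (g ` N')" using card_image[OF injg] by simp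
  also have "\<dots> \<le> card (N - N \<inter> ({i} \<times> UNIV))" by (rule card_mono[OF _ gsub]) (use finN in simp)
  also have "\<dots> = card N - card (N \<inter> ({i} \<times> UNIV))" by (rule card_Diff_subset) (use finN in auto)
  finally show "card N' + card (N \<inter> ({i} \<times> UNIV)) \<le> card N"
    using card_mono[OF finN, of "N \<inter> ({i} \<times> UNIV)"] by auto
qed

lemma lift:
  fixes X :: "nat \<times> nat \<Rightarrow> 'a::field"
  assumes i: "1 \<le> i" "i \<le> n" and j: "1 \<le> j" "j \<le> Suc k"
    and col: "\<forall>r\<in>{1..n}. X (r,j) = (if r = i then 1 else 0)"
    and nz: "cullis_det (n-1) k (delrc i j X) \<noteq> 0"
  shows "cullis_det n (Suc k) X \<noteq> 0"
  using cullis_laplace[OF i j col] nz by simp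

lemma cullis_zero: "cullis_det n 0 X = (1::'a::comm_ring_1)"
proof -
  have "{c. c \<subseteq> {1..n} \<and> card c = 0} = {{}}"
  proof -
    have "c = {}" if "c \<subseteq> {1..n}" "card c = 0" for c
      using that finite_subset[OF that(1)] by simp
    then show ?thesis by auto
  qed
  then show ?thesis unfolding cullis_det_def by simp
qed

lemma lemA:
  "\<forall>n K N. k \<le> n \<longrightarrow> N \<subseteq> grid n k \<longrightarrow> (k = 0 \<or> card N < k) \<longrightarrow> freeset K (grid n k) N
     \<longrightarrow> (\<exists>X\<in>K. cullis_det n k X \<noteq> (0::'a::field))"
proof (induction k)
  case 0
  show ?case
  proof (intro allI impI)
    fix n and K :: "(nat \<times> nat \<Rightarrow> 'a) set" and N
    assume "freeset K (grid n 0) N"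
    then obtain X where "X \<in> K" unfolding freeset_def by blast
    then show "\<exists>X\<in>K. cullis_det n 0 X \<noteq> 0" using cullis_zero[of n X] by (intro bexI[of _ X]) simp_all
  qed
next
  case (Suc k)
  show ?case
  proof (intro allI impI)
    fix n and K :: "(nat \<times> nat \<Rightarrow> 'a) set" and N
    assume kn: "Suc k \<le> n" and Nsub: "N \<subseteq> grid n (Suc k)" and cN: "Suc k = 0 \<or> card N < Suc k"
      and fr: "freeset K (grid n (Suc k)) N"
    have cN': "card N < Suc k" using cN by simp
    have finN: "finite N" using Nsub by (rule finite_subset) (simp add: grid_def)
    have "\<exists>j\<in>{1..Suc k}. j \<notin> snd ` N"
    proof (rule ccontr)
      assume "\<not> ?thesis"
      then have "{1..Suc k} \<subseteq> snd ` N" by blast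
      then have "card {1..Suc k} \<le> card (snd ` N)" by (rule card_mono[rotated]) (use finN in simp)
      also have "\<dots> \<le> card N" by (rule card_image_le[OF finN])
      finally show False using cN' by simp
    qed
    then obtain j where j: "1 \<le> j" "j \<le> Suc k" and jn: "j \<notin> snd ` N" by auto
    have colfree: "\<forall>r. (r,j) \<notin> N" using jn by force
    define e0 where "e0 = (SOME e. e \<in> N)"
    define i where "i = (if N = {} then 1 else fst e0)"
    have e0N: "N \<noteq> {} \<Longrightarrow> e0 \<in> N" unfolding e0_def by (simp add: some_in_eq)
    have i12: "1 \<le> i \<and> i \<le> n"
    proof (cases "N = {}")
      case True then show ?thesis unfolding i_def using kn by simp
    next
      case False
      then have "e0 \<in> grid n (Suc k)" using Nsub e0N by blast
      then have "fst e0 \<in> {1..n}" unfolding grid_def by (simp add: mem_Times_iff)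
      then show ?thesis unfolding i_def using False by simp
    qed
    then have i: "1 \<le> i" "i \<le> n" by auto
    have rowcard: "N \<noteq> {} \<Longrightarrow> 1 \<le> card (N \<inter> ({i} \<times> UNIV))"
    proof -
      assume ne: "N \<noteq> {}"
      then have "e0 \<in> N \<inter> ({i} \<times> UNIV)" using e0N unfolding i_def by (simp add: mem_Times_iff)
      then have "N \<inter> ({i} \<times> UNIV) \<noteq> {}" by blast
      moreover have "finite (N \<inter> ({i} \<times> UNIV))" using finN by simp
      ultimately show ?thesis by (simp add: Suc_le_eq card_gt_0_iff)
    qed
    define K' where "K' = {delrc i j X | X. X \<in> K \<and> (\<forall>r\<in>{1..n}. X (r,j) = (if r = i then 1 else 0))}"
    define N' where "N' = {e \<in> grid (n-1) k. (sh i (fst e), sh j (snd e)) \<in> N}"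
    have R: "freeset K' (grid (n-1) k) N' \<and> N' \<subseteq> grid (n-1) k \<and> card N' + card (N \<inter> ({i} \<times> UNIV)) \<le> card N"
      unfolding K'_def N'_def by (rule reduce[OF fr Nsub i j colfree])
    have "k = 0 \<or> card N' < k"
    proof (cases "N = {}")
      case True then show ?thesis using R by auto
    next
      case False then show ?thesis using R rowcard cN' by auto
    qed
    moreover have "k \<le> n - 1" using kn by simp
    ultimately obtain Y where Y: "Y \<in> K'" "cullis_det (n-1) k Y \<noteq> 0"
      using Suc.IH[rule_format, of "n-1" N' K'] R by blast
    then obtain X where X: "X \<in> K" "\<forall>r\<in>{1..n}. X (r,j) = (if r = i then 1 else 0)" "Y = delrc i j X"
      unfolding K'_def by blast
    show "\<exists>X\<in>K. cullis_det n (Suc k) X \<noteq> 0"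
      using lift[OF i j X(2)] X Y by blast
  qed
qed

theorem mainTheorem4:
  fixes n k j' :: nat and s :: "nat \<times> nat \<Rightarrow> 'a::field"
    and V :: "(nat \<times> nat \<Rightarrow> 'a) set" and K :: "(nat \<times> nat \<Rightarrow> 'a) set"
    and Bstar :: "(nat \<times> nat) set"
  assumes "1 < k" and "k \<le> n"
    and "lin_subspace_of (grid n k) V" and "s \<in> fn_space (grid n k)"
    and "K = lin_variety (grid n k) s V"
    and "n * k - vdim V = k"
    and "\<forall>X\<in>K. cullis_det n k X = 0"
    and "m_cobasis (grid n k) V Bstar"
    and "1 \<le> j'" and "j' \<le> k" and "Bstar \<inter> ({1..n} \<times> {j'}) = {}"
  shows "\<forall>i. 1 \<le> i \<and> i \<le> n \<longrightarrow> card (Bstar \<inter> ({i} \<times> {1..k})) \<le> 1"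
proof -
  note A = assms
  obtain B where basis: "m_basis (grid n k) V B" and Bs: "Bstar = grid n k - B"
    using A(8) unfolding m_cobasis_def by blast
  have finG: "finite (grid n k)" unfolding grid_def by simp
  have LA: "(\<forall>s y. \<exists>v\<in>V. \<forall>b\<in>B. s b + v b = y b) \<and> vdim V \<le> card B"
    by (rule LA_main[OF A(3) finG basis])
  have BG: "B \<subseteq> grid n k" using basis unfolding m_basis_def m_indep_def by blast
  have GB: "grid n k - Bstar = B" using BG Bs by blast
  have fr: "freeset K (grid n k) Bstar"
    unfolding freeset_def
  proof
    fix y :: "nat \<times> nat \<Rightarrow> 'a"
    obtain v where v: "v \<in> V" "\<forall>b\<in>B. s b + v b = y b" using LA by blast
    have "s + v \<in> K" using v(1) A(5) unfolding lin_variety_def by blast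
    moreover have "\<forall>e\<in>grid n k - Bstar. (s + v) e = y e" unfolding GB using v(2) by simp
    ultimately show "\<exists>X\<in>K. \<forall>e\<in>grid n k - Bstar. X e = y e" by blast
  qed
  have cardG: "card (grid n k) = n * k" unfolding grid_def by (simp add: card_cartesian_product)
  have BsG: "Bstar \<subseteq> grid n k" using Bs by blast
  have cB: "card Bstar \<le> k"
  proof -
    have "card Bstar = n * k - card B" unfolding Bs using card_Diff_subset[OF finite_subset[OF BG finG] BG] cardG by simp
    moreover have "vdim V \<le> card B" using LA by blast
    ultimately show ?thesis using A(6) by linarith
  qed
  obtain k0 where k0: "k = Suc k0" using A(1) by (cases k) auto
  have k0pos: "1 \<le> k0" using A(1) k0 by simp
  show ?thesis
  proof (intro allI impI, rule ccontr)
    fix i assume i: "1 \<le> i \<and> i \<le> n" and big: "\<not> card (Bstar \<inter> ({i} \<times> {1..k})) \<le> 1"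
    have colfree: "\<forall>r. (r,j') \<notin> Bstar"
    proof
      fix r show "(r,j') \<notin> Bstar"
      proof
        assume "(r,j') \<in> Bstar"
        moreover then have "r \<in> {1..n}" using BsG unfolding grid_def by auto
        ultimately show False using A(11) by auto
      qed
    qed
    have row: "Bstar \<inter> ({i} \<times> UNIV) = Bstar \<inter> ({i} \<times> {1..k})" using BsG unfolding grid_def by auto
    define K' where "K' = {delrc i j' X | X. X \<in> K \<and> (\<forall>r\<in>{1..n}. X (r,j') = (if r = i then 1 else 0))}"
    define N' where "N' = {e \<in> grid (n-1) k0. (sh i (fst e), sh j' (snd e)) \<in> Bstar}"
    have R: "freeset K' (grid (n-1) k0) N' \<and> N' \<subseteq> grid (n-1) k0 \<and> card N' + card (Bstar \<inter> ({i} \<times> UNIV)) \<le> card Bstar"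
      unfolding K'_def N'_def
      by (rule reduce[OF fr[unfolded k0] BsG[unfolded k0]]) (use i A(9) A(10) k0 colfree in auto)
    have c1: "card N' + card (Bstar \<inter> ({i} \<times> {1..k})) \<le> card Bstar" using R row by simp
    have "card N' < k0" using c1 big cB k0 by linarith
    moreover have "k0 \<le> n - 1" using A(2) k0 by simp
    ultimately obtain Y where Y: "Y \<in> K'" "cullis_det (n-1) k0 Y \<noteq> 0"
      using lemA[rule_format, of k0 "n-1" N' K'] R by blast
    then obtain X where X: "X \<in> K" "\<forall>r\<in>{1..n}. X (r,j') = (if r = i then 1 else 0)" "Y = delrc i j' X"
      unfolding K'_def by blast
    have "cullis_det n (Suc k0) X \<noteq> 0"
      by (rule lift[OF _ _ A(9) _ X(2)]) (use i A(10) k0 X(3) Y(2) in auto)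
    then show False using A(7) X(1) k0 by simp
  qed
qed

end
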